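(* For every positive integer $n$ and every nonnegative integer $q$, $$\left\langle\!\left\langle{n\atop q}\right\rangle\!\right\rangle=\sum_{i=0}^n(-1)^{q-i}\binom{n-i-1}{q-i}\left\{\!\left\{{n+i+1\atop i+1}\right\}\!\right\}.$$
   Context: Binomial coefficients are $\binom{a}{b}=a(a-1)\cdots(a-b+1)/b!$ for integers $b\ge0$ (any integer $a$) and $\binom{a}{b}=0$ for $b<0$. The second-order Eulerian numbers $\langle\langle{n\atop k}\rangle\rangle$ are defined by $\langle\langle{0\atop k}\rangle\rangle=1$ if $k=0$ and $0$ otherwise, $\langle\langle{n\atop k}\rangle\rangle=0$ for $k<0$, and $\langle\langle{n\atop k}\rangle\rangle=(k+1)\langle\langle{n-1\atop k}\rangle\rangle+(2n-k-1)\langle\langle{n-1\atop k-1}\rangle\rangle$ for $n\ge1$. The second-order Stirling numbers $\{\{{n\atop k}\}\}$ are the numbers of partitions of an $n$-element set into $k$ blocks each of size at least $2$; equivalently $\{\{{0\atop 0}\}\}=1$, $\{\{{n\atop k}\}\}=0$ when $n<0$ or $k\le0$ with $(n,k)\ne(0,0)$, and $\{\{{n\atop k}\}\}=k\{\{{n-1\atop k}\}\}+(n-1)\{\{{n-2\atop k-1}\}\}$ for $n\ge1$. *)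

theory Defs
  imports Main
begin

definition binom :: "int \<Rightarrow> int \<Rightarrow> int" where
  "binom a b = (if b < 0 then 0
                else (\<Prod>j<nat b. a - int j) div fact (nat b))"

fun eul2 :: "nat \<Rightarrow> int \<Rightarrow> int" where
  "eul2 0 k = (if k = 0 then 1 else 0)"
| "eul2 (Suc m) k = (if k < 0 then 0 else
     (k + 1) * eul2 m k + (2 * int (Suc m) - k - 1) * eul2 m (k - 1))"

text \<open>Second-order Stirling numbers (partitions into blocks of size at least 2).\<close>
fun stir2 :: "nat \<Rightarrow> int \<Rightarrow> int" where
  "stir2 0 k = (if k = 0 then 1 else 0)"
| "stir2 (Suc 0) k = 0"
| "stir2 (Suc (Suc m)) k = (if k \<le> 0 then 0 else
     k * stir2 (Suc m) k + int (Suc m) * stir2 m (k - 1))"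

end

theory Submission
  imports Defs "HOL-Computational_Algebra.Polynomial"
begin



lemma stir2_zero: "int m < 2 * k \<Longrightarrow> stir2 m k = 0"
proof (induction m k rule: stir2.induct)
  case (1 k) then show ?case by simp
next
  case (2 k) then show ?case by simp
next
  case (3 m k)
  have a: "stir2 (Suc m) k = 0" using 3 by simp
  have b: "stir2 m (k - 1) = 0" using 3 by simp
  show ?case by (simp add: a b)
qed

lemma stir2_k0: "stir2 (Suc m) 0 = 0"
  by (cases m) auto

definition aa :: "nat \<Rightarrow> nat \<Rightarrow> int" where
  "aa n i = stir2 (n + 1 + i) (int i + 1)"

lemma aa_zero: "n \<le> i \<Longrightarrow> aa n i = 0"
  unfolding aa_def by (rule stir2_zero) simp

lemma stir2_SS: "k > 0 \<Longrightarrow> stir2 (Suc (Suc m)) k = k * stir2 (Suc m) k + int (Suc m) * stir2 m (k - 1)"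
  by simp

lemma aa_rec0: "n \<ge> 1 \<Longrightarrow> aa (Suc n) 0 = aa n 0"
proof -
  assume "n \<ge> 1"
  then obtain m where m: "n = Suc m" by (cases n) auto
  have e: "aa (Suc n) 0 = stir2 (Suc (Suc n)) 1" unfolding aa_def by (simp del: stir2.simps)
  have "stir2 (Suc (Suc n)) 1 = 1 * stir2 (Suc n) 1 + int (Suc n) * stir2 n (1 - 1)"
    by (rule stir2_SS) simp
  moreover have "stir2 n 0 = 0" using stir2_k0 m by simp
  ultimately show ?thesis unfolding e unfolding aa_def by (simp del: stir2.simps)
qed

lemma aa_rec: "aa (Suc n) (Suc i) = (int i + 2) * aa n (Suc i) + (int n + int i + 2) * aa n i"
proof -
  have e: "aa (Suc n) (Suc i) = stir2 (Suc (Suc (n + 1 + i))) (int i + 2)"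
    unfolding aa_def by (simp del: stir2.simps add: algebra_simps)
  have "stir2 (Suc (Suc (n + 1 + i))) (int i + 2) = (int i + 2) * stir2 (Suc (n+1+i)) (int i + 2) + int (Suc (n+1+i)) * stir2 (n+1+i) (int i + 2 - 1)"
    by (rule stir2_SS) simp
  moreover have "aa n (Suc i) = stir2 (Suc (n+1+i)) (int i + 2)" unfolding aa_def by (simp del: stir2.simps add: algebra_simps)
  moreover have "aa n i = stir2 (n+1+i) (int i + 2 - 1)" unfolding aa_def by (simp del: stir2.simps add: algebra_simps)
  ultimately show ?thesis unfolding e by (simp del: stir2.simps add: algebra_simps)
qed

lemma eul2_neg: "k < 0 \<Longrightarrow> eul2 n k = 0"
  by (cases n) auto

lemma binom_nat: "binom (int a) (int b) = int (a choose b)"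
proof -
  have "(\<Prod>j<b. int a - int j) = int (a choose b) * fact b"
  proof (induction b)
    case 0 then show ?case by simp
  next
    case (Suc b)
    have "(\<Prod>j<Suc b. int a - int j) = int (a choose b) * fact b * (int a - int b)"
      using Suc by simp
    also have "\<dots> = int (a choose Suc b) * fact (Suc b)"
    proof (cases "b \<le> a")
      case True
      have "(a - b) * (a choose b) = (a choose Suc b) * Suc b"
      proof (cases a)
        case 0 then show ?thesis by simp
      next
        case (Suc a')
        have "(a - b) * (a choose b) = a * (a' choose b)"
          using binomial_absorb_comp[of a b] Suc by simp
        also have "\<dots> = Suc b * (a choose Suc b)"
          using Suc_times_binomial[of b a'] Suc by simp
        finally show ?thesis by simp
      qed
      then have "int (a - b) * int (a choose b) = int (a choose Suc b) * int (Suc b)"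
        by (simp only: of_nat_mult[symmetric])
      then show ?thesis using True by (simp add: of_nat_diff algebra_simps)
    next
      case False
      then show ?thesis by (simp add: binomial_eq_0)
    qed
    finally show ?case .
  qed
  then show ?thesis unfolding binom_def by simp
qed

abbreviation XX :: "int poly" where "XX \<equiv> [:0, 1:]"
abbreviation YY :: "int poly" where "YY \<equiv> [:1, -1:]"

lemma smult_of_nat_conv: "smult (of_nat n) p = (of_nat n :: int poly) * p"
  by (simp add: of_nat_poly)

lemma XY_deriv_pow:
  "XX * YY * pderiv (XX ^ i * YY ^ k) = of_nat i * (XX ^ i * YY ^ Suc k) - of_nat k * (XX ^ Suc i * YY ^ k)"
proof -
  have gen: "\<And>p::int poly. \<And>n. p * pderiv (p ^ n) = of_nat n * p ^ n * pderiv p"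
  proof -
    fix p :: "int poly" and n :: nat
    show "p * pderiv (p ^ n) = of_nat n * p ^ n * pderiv p"
      by (cases n) (simp_all add: pderiv_power_Suc smult_of_nat_conv del: power_Suc, simp add: algebra_simps smult_add_left smult_of_nat_conv)
  qed
  have pX: "pderiv XX = 1" by (simp add: pderiv_pCons)
  have pY: "pderiv YY = -1" by (simp add: pderiv_pCons one_pCons)
  have dX: "XX * pderiv (XX ^ i) = of_nat i * XX ^ i" using gen[of XX i] pX by simp
  have dY: "YY * pderiv (YY ^ k) = - (of_nat k * YY ^ k)" using gen[of YY k] pY by simp
  have "XX * YY * pderiv (XX ^ i * YY ^ k) = YY ^ k * YY * (XX * pderiv (XX ^ i)) + XX ^ i * XX * (YY * pderiv (YY ^ k))"
    by (simp add: pderiv_mult algebra_simps)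
  also have "\<dots> = of_nat i * (XX ^ i * YY ^ Suc k) - of_nat k * (XX ^ Suc i * YY ^ k)"
    unfolding dX dY by (simp add: algebra_simps)
  finally show ?thesis .
qed

lemma term_id:
  "(1 + of_nat (2*(i+k)+2) * XX) * (XX ^ i * YY ^ k) + XX * YY * pderiv (XX ^ i * YY ^ k)
   = of_nat (i+1) * (XX ^ i * YY ^ Suc k) + of_nat (i+k+i+3) * (XX ^ Suc i * YY ^ k)"
proof -
  have one: "(1::int poly) = YY + XX" by simp
  have "(1 + of_nat (2*(i+k)+2) * XX) * (XX ^ i * YY ^ k) = XX ^ i * YY ^ Suc k + of_nat (2*(i+k)+3) * (XX ^ Suc i * YY ^ k)"
    apply (subst (1) one) by (simp add: algebra_simps)
  then show ?thesis unfolding XY_deriv_pow by (simp add: algebra_simps)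
qed

lemma pderiv_sum': "pderiv (sum f A) = (\<Sum>x\<in>A. pderiv (f x))"
  using higher_pderiv_sum[of 1 f A] by simp

lemma lin_sum:
  fixes A C :: "int poly"
  shows "A * (\<Sum>i\<in>S. smult (c i) (p i)) + C * pderiv (\<Sum>i\<in>S. smult (c i) (p i))
     = (\<Sum>i\<in>S. smult (c i) (A * p i + C * pderiv (p i)))"
  by (simp add: sum_distrib_left pderiv_sum' pderiv_smult sum.distrib smult_add_right)

lemma ofnat_smult: "(of_nat k :: int poly) * p = smult (int k) p"
  by (simp add: smult_of_nat_conv)

definition BB :: "nat \<Rightarrow> nat \<Rightarrow> int poly" where
  "BB i k = XX ^ i * YY ^ k"

definition PP :: "nat \<Rightarrow> int poly" where
  "PP n = (\<Sum>i<n. smult (aa n i) (BB i (n - 1 - i)))"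

lemma PP_rec:
  assumes "n \<ge> 1"
  shows "PP (Suc n) = (1 + of_nat (2*n) * XX) * PP n + XX * YY * pderiv (PP n)"
proof -
  have tm: "(1 + of_nat (2*n) * XX) * BB i (n - 1 - i) + XX * YY * pderiv (BB i (n - 1 - i))
      = of_nat (i+1) * BB i (n - i) + of_nat (n+i+2) * BB (Suc i) (n - Suc i)" if "i < n" for i
  proof -
    have e1: "2*n = 2*(i + (n-1-i)) + 2" and e2: "n - i = Suc (n-1-i)" and e3: "n+i+2 = i + (n-1-i) + i + 3"
      and e4: "n - Suc i = n - 1 - i"
      using that by auto
    show ?thesis unfolding BB_def e1 e2 e3 e4 by (rule term_id)
  qed
  have R: "(1 + of_nat (2*n) * XX) * PP n + XX * YY * pderiv (PP n)
     = (\<Sum>i<n. smult (aa n i) (of_nat (i+1) * BB i (n - i))) + (\<Sum>i<n. smult (aa n i) (of_nat (n+i+2) * BB (Suc i) (n - Suc i)))"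
  proof -
    have "(1 + of_nat (2*n) * XX) * PP n + XX * YY * pderiv (PP n)
       = (\<Sum>i<n. smult (aa n i) ((1 + of_nat (2*n) * XX) * BB i (n - 1 - i) + XX * YY * pderiv (BB i (n - 1 - i))))"
      unfolding PP_def by (rule lin_sum)
    also have "\<dots> = (\<Sum>i<n. smult (aa n i) (of_nat (i+1) * BB i (n - i)) + smult (aa n i) (of_nat (n+i+2) * BB (Suc i) (n - Suc i)))"
    proof (rule sum.cong[OF refl])
      fix i assume "i \<in> {..<n}"
      then have "i < n" by simp
      show "smult (aa n i) ((1 + of_nat (2*n) * XX) * BB i (n - 1 - i) + XX * YY * pderiv (BB i (n - 1 - i)))
        = smult (aa n i) (of_nat (i+1) * BB i (n - i)) + smult (aa n i) (of_nat (n+i+2) * BB (Suc i) (n - Suc i))"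
        by (simp only: tm[OF \<open>i < n\<close>] smult_add_right)
    qed
    finally show ?thesis by (simp add: sum.distrib)
  qed
  have T1: "(\<Sum>i<n. smult (aa n i) (of_nat (i+1) * BB i (n - i)))
     = smult (aa n 0) (BB 0 n) + (\<Sum>i<n. smult (aa n (Suc i)) (of_nat (i+2) * BB (Suc i) (n - Suc i)))"
  proof -
    have "(\<Sum>i<n. smult (aa n i) (of_nat (i+1) * BB i (n - i))) = (\<Sum>i<Suc n. smult (aa n i) (of_nat (i+1) * BB i (n - i)))"
      by (simp add: aa_zero)
    also have "\<dots> = smult (aa n 0) (BB 0 n) + (\<Sum>i<n. smult (aa n (Suc i)) (of_nat (i+2) * BB (Suc i) (n - Suc i)))"
      by (subst sum.lessThan_Suc_shift) simp
    finally show ?thesis .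
  qed
  have L: "PP (Suc n) = smult (aa n 0) (BB 0 n) + (\<Sum>i<n. smult (aa n (Suc i)) (of_nat (i+2) * BB (Suc i) (n - Suc i)))
       + (\<Sum>i<n. smult (aa n i) (of_nat (n+i+2) * BB (Suc i) (n - Suc i)))"
  proof -
    have "PP (Suc n) = smult (aa (Suc n) 0) (BB 0 n) + (\<Sum>i<n. smult (aa (Suc n) (Suc i)) (BB (Suc i) (n - Suc i)))"
      unfolding PP_def by (subst sum.lessThan_Suc_shift) simp
    also have "(\<Sum>i<n. smult (aa (Suc n) (Suc i)) (BB (Suc i) (n - Suc i)))
      = (\<Sum>i<n. smult (aa n (Suc i)) (of_nat (i+2) * BB (Suc i) (n - Suc i)) + smult (aa n i) (of_nat (n+i+2) * BB (Suc i) (n - Suc i)))"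
      by (rule sum.cong[OF refl]) (simp only: ofnat_smult smult_smult aa_rec smult_add_left[symmetric], simp add: algebra_simps)
    finally show ?thesis using aa_rec0[OF assms] by (simp add: sum.distrib add.assoc)
  qed
  show ?thesis using L R T1 by simp
qed


lemma coeff_XX: "coeff (XX * p) q = (if q = 0 then 0 else coeff p (q - 1))"
proof -
  have "XX * p = pCons 0 p"
    by (simp only: mult_pCons_left smult_0_left add_0_left mult_1_left one_pCons[symmetric])
  then show ?thesis by (simp add: coeff_pCons')
qed

lemma YY_eq: "YY = 1 - XX"
  by (simp add: one_pCons)

lemma coeffL:
  "coeff ((1 + of_nat m * XX) * p + XX * YY * pderiv p) q
   = coeff p q + (if q = 0 then 0 else of_nat m * coeff p (q-1) + of_nat q * coeff p q - of_nat (q-1) * coeff p (q-1))"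
proof -
  have a: "(1 + of_nat m * XX) * p = p + smult (int m) (XX * p)"
    by (simp only: distrib_right mult_1_left mult.assoc ofnat_smult mult_smult_left)
  have b: "XX * YY * pderiv p = XX * pderiv p - XX * (XX * pderiv p)"
    unfolding YY_eq by (simp only: right_diff_distrib left_diff_distrib mult_1_right mult.assoc)
  show ?thesis
    unfolding a b coeff_add coeff_diff coeff_smult coeff_XX
    by (cases q) (simp_all add: coeff_pderiv algebra_simps)
qed

lemma PP_coeff_rec:
  assumes "n \<ge> 1"
  shows "coeff (PP (Suc n)) 0 = coeff (PP n) 0"
    and "coeff (PP (Suc n)) (Suc r) = (int r + 2) * coeff (PP n) (Suc r) + (2 * int n - int r) * coeff (PP n) r"
  using coeffL[of "2*n" "PP n" 0] coeffL[of "2*n" "PP n" "Suc r"] unfolding PP_rec[OF assms, symmetric]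
  by (simp_all add: algebra_simps)

lemma PP_1: "PP (Suc 0) = 1"
  unfolding PP_def BB_def aa_def by simp

lemma eul2_PP: "n \<ge> 1 \<Longrightarrow> eul2 n (int q) = coeff (PP n) q"
proof (induction n arbitrary: q rule: nat_induct_at_least)
  case base
  then show ?case by (cases q) (simp_all add: PP_1)
next
  case (Suc n)
  note IH = Suc.IH and h = Suc.hyps
  show ?case
  proof (cases q)
    case 0
    then show ?thesis using IH[of 0] PP_coeff_rec(1)[OF h] by (simp add: eul2_neg)
  next
    case (Suc r)
    have "eul2 (Suc n) (int q) = (int r + 2) * eul2 n (int (Suc r)) + (2 * int n - int r) * eul2 n (int r)"
      using Suc by (simp add: algebra_simps)
    then show ?thesis using Suc IH[of r] IH[of "Suc r"] PP_coeff_rec(2)[OF h] by simp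
  qed
qed


lemma coeff_YY_pow: "coeff (YY ^ k) j = (-1) ^ j * int (k choose j)"
proof (cases "j \<le> k")
  case True
  then show ?thesis using coeff_linear_poly_power[OF True, of 1 "-1"] by (simp add: mult_ac)
next
  case False
  have "degree (YY ^ k) \<le> k" using degree_power_le[of YY k] by simp
  then have "coeff (YY ^ k) j = 0" using False by (intro coeff_eq_0) simp
  then show ?thesis using False by simp
qed

lemma coeff_BB: "coeff (BB i k) q = (if i \<le> q then (-1) ^ (q - i) * int (k choose (q - i)) else 0)"
proof -
  have "XX ^ i = monom 1 i" by (simp add: monom_altdef)
  then show ?thesis unfolding BB_def by (simp add: coeff_monom_mult coeff_YY_pow)
qed

lemma final:
  fixes n q :: nat
  assumes "n \<ge> 1"
  shows "eul2 n (int q) =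
    (\<Sum>i=0..n. (-1) ^ nat \<bar>int q - int i\<bar> * binom (int n - int i - 1) (int q - int i)
                  * stir2 (n + i + 1) (int i + 1))"
proof -
  define f where "f i = (-1) ^ nat \<bar>int q - int i\<bar> * binom (int n - int i - 1) (int q - int i)
                  * stir2 (n + i + 1) (int i + 1)" for i
  have "(\<Sum>i=0..n. f i) = (\<Sum>i<Suc n. f i)"
    by (simp add: atLeast0AtMost lessThan_Suc_atMost)
  also have "\<dots> = (\<Sum>i<n. f i)"
    using stir2_zero[of "n + n + 1" "int n + 1"] by (simp add: f_def)
  also have "\<dots> = (\<Sum>i<n. aa n i * coeff (BB i (n - 1 - i)) q)"
  proof (rule sum.cong[OF refl])
    fix i assume "i \<in> {..<n}"
    then have i: "i < n" by simp
    show "f i = aa n i * coeff (BB i (n - 1 - i)) q"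
    proof (cases "i \<le> q")
      case True
      have e1: "int n - int i - 1 = int (n - 1 - i)" using i by simp
      have e2: "int q - int i = int (q - i)" using True by simp
      have e3: "nat \<bar>int q - int i\<bar> = q - i" using True by simp
      have e4: "nat (int q - int i) = q - i" using True by simp
      have "f i = (-1) ^ (q - i) * binom (int (n - 1 - i)) (int (q - i)) * stir2 (n + i + 1) (int i + 1)"
        unfolding f_def e1 e2 by simp
      then show ?thesis unfolding coeff_BB binom_nat aa_def using True
        by (simp add: algebra_simps)
    next
      case False
      then show ?thesis unfolding f_def coeff_BB by (simp add: binom_def)
    qed
  qed
  also have "\<dots> = coeff (PP n) q"
    unfolding PP_def coeff_sum by simp
  finally show ?thesis using eul2_PP[OF assms] unfolding f_def by simp
qed

theorem corollary5:
  fixes n q :: nat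
  assumes "n \<ge> 1"
  shows "eul2 n (int q) =
    (\<Sum>i=0..n. (-1) ^ nat \<bar>int q - int i\<bar> * binom (int n - int i - 1) (int q - int i)
                  * stir2 (n + i + 1) (int i + 1))"
  using final[OF assms] .

end
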